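(* Let $\mathcal{G}^1$ and $\mathcal{G}^2$ be any two edge-featured graphs (as described in the context). The E-WL-EA algorithm distinguishes $\mathcal{G}^1$ and $\mathcal{G}^2$ if and only if the E-WL algorithm distinguishes them; that is, the discriminative power of E-WL-EA is the same as that of E-WL.
   Context: An edge-featured graph is $\mathcal{G}=(\mathcal{V},\mathcal{E},\mathcal{X}_V,\mathcal{X}_E)$: a finite undirected graph with no self-loops and no isolated nodes, where each node $n_i\in\mathcal{V}$ carries a discrete feature $x^n_i$ and each edge $e_{i,j}\in\mathcal{E}$ (joining $n_i$ and $n_j$) carries a discrete feature $x^e_{i,j}=x^e_{j,i}$. Write $\mathcal{N}_{(i)}$ for the set of neighbours of $n_i$, and $\{\{\cdot\}\}$ for a multiset. Both algorithms below are run on the two graphs simultaneously with the same injective function $HASH$ (equal inputs give equal outputs and distinct inputs give distinct outputs, across both graphs). E-WL (Edged Weisfeiler–Lehman): $c^{(0)}_i=x^n_i$ and $c^{(l)}_i=HASH\big(c^{(l-1)}_i,\{\{(c^{(l-1)}_j,x^e_{i,j}) : n_j\in\mathcal{N}_{(i)}\}\}\big)$. E-WL-EA (Edged Weisfeiler–Lehman with edge aggregation): $c^{(0)}_i=x^n_i$, $d^{(0)}_{i,j}=x^e_{i,j}$, and for $l\ge1$: $c^{(l)}_i=HASH\big(c^{(l-1)}_i,\{\{(c^{(l-1)}_j,d^{(l-1)}_{i,j}) : n_j\in\mathcal{N}_{(i)}\}\}\big)$, then for every edge $d^{(l)}_{i,j}=HASH\big(d^{(l-1)}_{i,j},c^{(l)}_i,c^{(l)}_j\big)$.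 For either algorithm, iteration continues until the node colours stabilize; the output for a graph is the multiset of node colours $\{\{c^{(l)}_i : n_i\in\mathcal{V}\}\}$. The algorithm distinguishes two graphs (declares them non-isomorphic) if these multisets of node colours differ for the two graphs (at some iteration $l$). *)

theory Defs
  imports Main "HOL-Library.Multiset"
begin

definition edge_featured_graph ::
  "'v set \<Rightarrow> ('v \<Rightarrow> 'v \<Rightarrow> bool) \<Rightarrow> ('v \<Rightarrow> 'c) \<Rightarrow> ('v \<Rightarrow> 'v \<Rightarrow> 'c) \<Rightarrow> bool" where
  "edge_featured_graph V E xn xe \<longleftrightarrow>
     finite V \<and>
     (\<forall>u v. E u v \<longrightarrow> u \<in> V \<and> v \<in> V) \<and>
     (\<forall>u v. E u v \<longrightarrow> E v u) \<and>
     (\<forall>u. \<not> E u u) \<and>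
     (\<forall>u \<in> V. \<exists>v. E u v) \<and>
     (\<forall>u v. E u v \<longrightarrow> xe u v = xe v u)"

definition nbrs :: "('v \<Rightarrow> 'v \<Rightarrow> bool) \<Rightarrow> 'v \<Rightarrow> 'v set" where
  "nbrs E i = {j. E i j}"

fun ewl :: "('c \<times> ('c \<times> 'c) multiset \<Rightarrow> 'c) \<Rightarrow> ('v \<Rightarrow> 'v \<Rightarrow> bool) \<Rightarrow> ('v \<Rightarrow> 'c) \<Rightarrow>
            ('v \<Rightarrow> 'v \<Rightarrow> 'c) \<Rightarrow> nat \<Rightarrow> 'v \<Rightarrow> 'c" where
  "ewl hash E xn xe 0 i = xn i"
| "ewl hash E xn xe (Suc l) i =
     hash (ewl hash E xn xe l i,
           image_mset (\<lambda>j. (ewl hash E xn xe l j, xe i j)) (mset_set (nbrs E i)))"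

fun ewl_ea :: "('c \<times> ('c \<times> 'c) multiset \<Rightarrow> 'c) \<Rightarrow> ('c \<times> 'c \<times> 'c \<Rightarrow> 'c) \<Rightarrow>
               ('v \<Rightarrow> 'v \<Rightarrow> bool) \<Rightarrow> ('v \<Rightarrow> 'c) \<Rightarrow> ('v \<Rightarrow> 'v \<Rightarrow> 'c) \<Rightarrow> nat \<Rightarrow>
               ('v \<Rightarrow> 'c) \<times> ('v \<Rightarrow> 'v \<Rightarrow> 'c)" where
  "ewl_ea hashN hashE E xn xe 0 = (xn, xe)"
| "ewl_ea hashN hashE E xn xe (Suc l) =
     (let c = fst (ewl_ea hashN hashE E xn xe l);
          d = snd (ewl_ea hashN hashE E xn xe l);
          c' = (\<lambda>i. hashN (c i, image_mset (\<lambda>j. (c j, d i j)) (mset_set (nbrs E i))));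
          d' = (\<lambda>i j. hashE (d i j, c' i, c' j))
      in (c', d'))"

definition ewl_colours where
  "ewl_colours hash V E xn xe l = image_mset (ewl hash E xn xe l) (mset_set V)"

definition ewl_ea_colours where
  "ewl_ea_colours hashN hashE V E xn xe l =
     image_mset (fst (ewl_ea hashN hashE E xn xe l)) (mset_set V)"

definition ewl_distinguishes ::
  "('c \<times> ('c \<times> 'c) multiset \<Rightarrow> 'c) \<Rightarrow>
   'v set \<Rightarrow> ('v \<Rightarrow> 'v \<Rightarrow> bool) \<Rightarrow> ('v \<Rightarrow> 'c) \<Rightarrow> ('v \<Rightarrow> 'v \<Rightarrow> 'c) \<Rightarrow>
   'w set \<Rightarrow> ('w \<Rightarrow> 'w \<Rightarrow> bool) \<Rightarrow> ('w \<Rightarrow> 'c) \<Rightarrow> ('w \<Rightarrow> 'w \<Rightarrow> 'c) \<Rightarrow> bool" where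
  "ewl_distinguishes hash V1 E1 xn1 xe1 V2 E2 xn2 xe2 \<longleftrightarrow>
     (\<exists>l. ewl_colours hash V1 E1 xn1 xe1 l \<noteq> ewl_colours hash V2 E2 xn2 xe2 l)"

definition ewl_ea_distinguishes ::
  "('c \<times> ('c \<times> 'c) multiset \<Rightarrow> 'c) \<Rightarrow> ('c \<times> 'c \<times> 'c \<Rightarrow> 'c) \<Rightarrow>
   'v set \<Rightarrow> ('v \<Rightarrow> 'v \<Rightarrow> bool) \<Rightarrow> ('v \<Rightarrow> 'c) \<Rightarrow> ('v \<Rightarrow> 'v \<Rightarrow> 'c) \<Rightarrow>
   'w set \<Rightarrow> ('w \<Rightarrow> 'w \<Rightarrow> bool) \<Rightarrow> ('w \<Rightarrow> 'c) \<Rightarrow> ('w \<Rightarrow> 'w \<Rightarrow> 'c) \<Rightarrow> bool" where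
  "ewl_ea_distinguishes hashN hashE V1 E1 xn1 xe1 V2 E2 xn2 xe2 \<longleftrightarrow>
     (\<exists>l. ewl_ea_colours hashN hashE V1 E1 xn1 xe1 l \<noteq> ewl_ea_colours hashN hashE V2 E2 xn2 xe2 l)"

end

theory Submission
  imports Defs
begin

fun PD :: "('c \<times> ('c \<times> 'c) multiset \<Rightarrow> 'c) \<Rightarrow> ('c \<times> 'c \<times> 'c \<Rightarrow> 'c) \<Rightarrow> nat \<Rightarrow>
   ('c \<Rightarrow> 'c) \<times> ('c \<Rightarrow> 'c \<Rightarrow> 'c \<Rightarrow> 'c)" where
  "PD hN hE 0 = (\<lambda>x. x, \<lambda>x a b. x)"
| "PD hN hE (Suc l) =
    (let P = fst (PD hN hE l); D = snd (PD hN hE l);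
         P' = (\<lambda>w. hN (P (fst (inv hN w)),
                  image_mset (\<lambda>(w', x). (P w', D x (fst (inv hN w)) w')) (snd (inv hN w))))
     in (P', \<lambda>x a b. hE (D x (fst (inv hN a)) (fst (inv hN b)), P' a, P' b)))"

fun PX :: "('c \<times> ('c \<times> 'c) multiset \<Rightarrow> 'c) \<Rightarrow> ('c \<times> 'c \<times> 'c \<Rightarrow> 'c) \<Rightarrow> nat \<Rightarrow>
   ('c \<Rightarrow> 'c) \<times> ('c \<Rightarrow> 'c)" where
  "PX hN hE 0 = (\<lambda>x. x, \<lambda>x. x)"
| "PX hN hE (Suc l) =
    (let P = fst (PX hN hE l); X = snd (PX hN hE l)
     in (\<lambda>c. hN (P (fst (inv hN c)),
                  image_mset (\<lambda>(c', d). (P c', X d)) (snd (inv hN c))),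
         \<lambda>d. X (fst (inv hE d))))"

lemma fwd:
  assumes "inj hN" "inj hE"
  shows "(\<forall>i. fst (ewl_ea hN hE E xn xe l) i = fst (PD hN hE l) (ewl hN E xn xe l i)) \<and>
         (\<forall>i j. snd (ewl_ea hN hE E xn xe l) i j =
             snd (PD hN hE l) (xe i j) (ewl hN E xn xe l i) (ewl hN E xn xe l j))"
proof (induction l)
  case 0
  then show ?case by simp
next
  case (Suc l)
  have A: "\<forall>i. fst (ewl_ea hN hE E xn xe (Suc l)) i = fst (PD hN hE (Suc l)) (ewl hN E xn xe (Suc l) i)"
    using Suc.IH by (simp add: Let_def inv_f_f[OF assms(1)] multiset.map_comp o_def)
  show ?case
    using A Suc.IH by (simp add: Let_def inv_f_f[OF assms(1)])
qed

lemma bwd: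
  assumes "inj hN" "inj hE"
  shows "(\<forall>i. ewl hN E xn xe l i = fst (PX hN hE l) (fst (ewl_ea hN hE E xn xe l) i)) \<and>
         (\<forall>i j. snd (PX hN hE l) (snd (ewl_ea hN hE E xn xe l) i j) = xe i j)"
proof (induction l)
  case 0
  then show ?case by simp
next
  case (Suc l)
  then show ?case
    by (simp add: Let_def inv_f_f[OF assms(1)] inv_f_f[OF assms(2)] multiset.map_comp o_def)
qed

theorem theorem2:
  fixes V1 :: "'v set" and E1 :: "'v \<Rightarrow> 'v \<Rightarrow> bool" and xn1 :: "'v \<Rightarrow> 'c" and xe1 :: "'v \<Rightarrow> 'v \<Rightarrow> 'c"
    and V2 :: "'w set" and E2 :: "'w \<Rightarrow> 'w \<Rightarrow> bool" and xn2 :: "'w \<Rightarrow> 'c" and xe2 :: "'w \<Rightarrow> 'w \<Rightarrow> 'c"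
    and hashN :: "'c \<times> ('c \<times> 'c) multiset \<Rightarrow> 'c" and hashE :: "'c \<times> 'c \<times> 'c \<Rightarrow> 'c"
  assumes "edge_featured_graph V1 E1 xn1 xe1"
    and "edge_featured_graph V2 E2 xn2 xe2"
    and "inj hashN" and "inj hashE"
  shows "ewl_ea_distinguishes hashN hashE V1 E1 xn1 xe1 V2 E2 xn2 xe2 \<longleftrightarrow>
         ewl_distinguishes hashN V1 E1 xn1 xe1 V2 E2 xn2 xe2"
proof -
  have eq: "ewl_ea_colours hashN hashE V1 E1 xn1 xe1 l = ewl_ea_colours hashN hashE V2 E2 xn2 xe2 l
        \<longleftrightarrow> ewl_colours hashN V1 E1 xn1 xe1 l = ewl_colours hashN V2 E2 xn2 xe2 l" for l
  proof -
    have f1: "fst (ewl_ea hashN hashE E1 xn1 xe1 l) = fst (PD hashN hashE l) \<circ> ewl hashN E1 xn1 xe1 l"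
      using fwd[OF assms(3,4), of E1 xn1 xe1 l] by auto
    have f2: "fst (ewl_ea hashN hashE E2 xn2 xe2 l) = fst (PD hashN hashE l) \<circ> ewl hashN E2 xn2 xe2 l"
      using fwd[OF assms(3,4), of E2 xn2 xe2 l] by auto
    have b1: "ewl hashN E1 xn1 xe1 l = fst (PX hashN hashE l) \<circ> fst (ewl_ea hashN hashE E1 xn1 xe1 l)"
      using bwd[OF assms(3,4), of E1 xn1 xe1 l] by auto
    have b2: "ewl hashN E2 xn2 xe2 l = fst (PX hashN hashE l) \<circ> fst (ewl_ea hashN hashE E2 xn2 xe2 l)"
      using bwd[OF assms(3,4), of E2 xn2 xe2 l] by auto
    show ?thesis
    proof
      assume h: "ewl_ea_colours hashN hashE V1 E1 xn1 xe1 l = ewl_ea_colours hashN hashE V2 E2 xn2 xe2 l"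
      have "ewl_colours hashN V1 E1 xn1 xe1 l = image_mset (fst (PX hashN hashE l)) (ewl_ea_colours hashN hashE V1 E1 xn1 xe1 l)"
        unfolding ewl_colours_def ewl_ea_colours_def by (subst b1) (simp add: multiset.map_comp)
      also have "\<dots> = image_mset (fst (PX hashN hashE l)) (ewl_ea_colours hashN hashE V2 E2 xn2 xe2 l)"
        using h by simp
      also have "\<dots> = ewl_colours hashN V2 E2 xn2 xe2 l"
        unfolding ewl_colours_def ewl_ea_colours_def by (subst b2) (simp add: multiset.map_comp)
      finally show "ewl_colours hashN V1 E1 xn1 xe1 l = ewl_colours hashN V2 E2 xn2 xe2 l" .
    next
      assume h: "ewl_colours hashN V1 E1 xn1 xe1 l = ewl_colours hashN V2 E2 xn2 xe2 l"
      have "ewl_ea_colours hashN hashE V1 E1 xn1 xe1 l = image_mset (fst (PD hashN hashE l)) (ewl_colours hashN V1 E1 xn1 xe1 l)"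
        unfolding ewl_colours_def ewl_ea_colours_def by (subst f1) (simp add: multiset.map_comp)
      also have "\<dots> = image_mset (fst (PD hashN hashE l)) (ewl_colours hashN V2 E2 xn2 xe2 l)"
        using h by simp
      also have "\<dots> = ewl_ea_colours hashN hashE V2 E2 xn2 xe2 l"
        unfolding ewl_colours_def ewl_ea_colours_def by (subst f2) (simp add: multiset.map_comp)
      finally show "ewl_ea_colours hashN hashE V1 E1 xn1 xe1 l = ewl_ea_colours hashN hashE V2 E2 xn2 xe2 l" .
    qed
  qed
  show ?thesis unfolding ewl_ea_distinguishes_def ewl_distinguishes_def using eq by blast
qed

end
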